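(* Let $L$ be one of the logics $\mathsf{MN}$, $\mathsf{MNF}$, $\mathsf{MNP}$, $\mathsf{MND}$, $\mathsf{MNPF}$, $\mathsf{MNDF}$. Then for any modal formula $A$ the following are equivalent: (1) $L\vdash A$; (2) $A$ is valid in all $L$-frames; (3) $A$ is valid in all finite $L$-frames.
   Context: The modal language has countably many propositional variables, $\bot$, $\to$ and $\Box$, with the other connectives as abbreviations. $\mathsf{MN}$ is the logic whose axioms are all propositional tautologies in this language and whose rules are modus ponens, necessitation ($A / \Box A$) and monotonicity RM ($A\to B / \Box A\to\Box B$). $\mathsf{MNP}$ is $\mathsf{MN}$ plus the axiom scheme $\neg\Box\bot$; $\mathsf{MND}$ is $\mathsf{MN}$ plus the scheme $\neg(\Box A\land\Box\neg A)$; $\mathsf{MNF}$, $\mathsf{MNPF}$, $\mathsf{MNDF}$ are obtained from $\mathsf{MN}$, $\mathsf{MNP}$, $\mathsf{MND}$ respectively by adding the scheme $\Box A\to\Box\Box A$. An $\mathsf{MN}$-frame is a pair $(W,\prec)$ where $W$ is a non-empty set and $\prec$ is a relation between elements of $W$ and non-empty subsets of $W$ such that $x\prec V$ and $V\subseteq U\subseteq W$ imply $x\prec U$. A satisfaction relation $\Vdash$ on it obeys the usual Boolean clauses and: $x\Vdash\Box A$ iff for every $V$ with $x\prec V$ some $y\in V$ has $y\Vdash A$. $A$ is valid in a frame if it holds at every point under every satisfaction relation. The frame is transitive if whenever $x\prec V$ and $y\prec U_y$ for each $y\in V$, then $x\prec\bigcup_{y\in V}U_y$; it is an $\mathsf{MNP}$-frame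 if every $x$ has some $V$ with $x\prec V$; it is an $\mathsf{MND}$-frame if for all $x\in W$, $V\subseteq W$: $x\prec V$ or $x\prec W\setminus V$. The $\mathsf{MN}$-, $\mathsf{MNP}$-, $\mathsf{MND}$-frames are as just defined; $\mathsf{MNF}$-, $\mathsf{MNPF}$-, $\mathsf{MNDF}$-frames are respectively the transitive $\mathsf{MN}$-, $\mathsf{MNP}$-, $\mathsf{MND}$-frames. A frame is finite if $W$ is finite. *)

theory Defs
  imports Main
begin

datatype fm = Var nat | Bot | Imp fm fm | Box fm

definition Neg :: "fm \<Rightarrow> fm" where "Neg A = Imp A Bot"
definition Conj :: "fm \<Rightarrow> fm \<Rightarrow> fm" where "Conj A B = Neg (Imp A (Neg B))"

fun peval :: "(fm \<Rightarrow> bool) \<Rightarrow> fm \<Rightarrow> bool" where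
  "peval v (Var n) = v (Var n)"
| "peval v Bot = False"
| "peval v (Imp A B) = (peval v A \<longrightarrow> peval v B)"
| "peval v (Box A) = v (Box A)"

definition tautology :: "fm \<Rightarrow> bool" where
  "tautology A = (\<forall>v. peval v A)"

datatype logic = MN | MNF | MNP | MND | MNPF | MNDF

definition hasP :: "logic \<Rightarrow> bool" where "hasP L = (L = MNP \<or> L = MNPF)"
definition hasD :: "logic \<Rightarrow> bool" where "hasD L = (L = MND \<or> L = MNDF)"
definition hasF :: "logic \<Rightarrow> bool" where "hasF L = (L = MNF \<or> L = MNPF \<or> L = MNDF)"

inductive prov :: "logic \<Rightarrow> fm \<Rightarrow> bool" for L where
  taut: "tautology A \<Longrightarrow> prov L A"
| axP: "hasP L \<Longrightarrow> prov L (Neg (Box Bot))"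
| axD: "hasD L \<Longrightarrow> prov L (Neg (Conj (Box A) (Box (Neg A))))"
| axF: "hasF L \<Longrightarrow> prov L (Imp (Box A) (Box (Box A)))"
| mp: "prov L (Imp A B) \<Longrightarrow> prov L A \<Longrightarrow> prov L B"
| nec: "prov L A \<Longrightarrow> prov L (Box A)"
| rm: "prov L (Imp A B) \<Longrightarrow> prov L (Imp (Box A) (Box B))"

definition mn_frame :: "'w set \<Rightarrow> ('w \<Rightarrow> 'w set \<Rightarrow> bool) \<Rightarrow> bool" where
  "mn_frame W R \<longleftrightarrow> W \<noteq> {}
     \<and> (\<forall>x V. R x V \<longrightarrow> x \<in> W \<and> V \<noteq> {} \<and> V \<subseteq> W)
     \<and> (\<forall>x V U. R x V \<and> V \<subseteq> U \<and> U \<subseteq> W \<longrightarrow> R x U)"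

definition transitive_frame :: "'w set \<Rightarrow> ('w \<Rightarrow> 'w set \<Rightarrow> bool) \<Rightarrow> bool" where
  "transitive_frame W R \<longleftrightarrow>
     (\<forall>x V Us. R x V \<and> (\<forall>y\<in>V. R y (Us y)) \<longrightarrow> R x (\<Union>y\<in>V. Us y))"

definition P_frame :: "'w set \<Rightarrow> ('w \<Rightarrow> 'w set \<Rightarrow> bool) \<Rightarrow> bool" where
  "P_frame W R \<longleftrightarrow> (\<forall>x\<in>W. \<exists>V. R x V)"

definition D_frame :: "'w set \<Rightarrow> ('w \<Rightarrow> 'w set \<Rightarrow> bool) \<Rightarrow> bool" where
  "D_frame W R \<longleftrightarrow> (\<forall>x\<in>W. \<forall>V. V \<subseteq> W \<longrightarrow> R x V \<or> R x (W - V))"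

definition L_frame :: "logic \<Rightarrow> 'w set \<Rightarrow> ('w \<Rightarrow> 'w set \<Rightarrow> bool) \<Rightarrow> bool" where
  "L_frame L W R \<longleftrightarrow> mn_frame W R
     \<and> (hasP L \<longrightarrow> P_frame W R)
     \<and> (hasD L \<longrightarrow> D_frame W R)
     \<and> (hasF L \<longrightarrow> transitive_frame W R)"

fun sat :: "('w \<Rightarrow> 'w set \<Rightarrow> bool) \<Rightarrow> (nat \<Rightarrow> 'w set) \<Rightarrow> 'w \<Rightarrow> fm \<Rightarrow> bool" where
  "sat R Val x (Var n) = (x \<in> Val n)"
| "sat R Val x Bot = False"
| "sat R Val x (Imp A B) = (sat R Val x A \<longrightarrow> sat R Val x B)"
| "sat R Val x (Box A) = (\<forall>V. R x V \<longrightarrow> (\<exists>y\<in>V. sat R Val y A))"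

definition valid_in :: "'w set \<Rightarrow> ('w \<Rightarrow> 'w set \<Rightarrow> bool) \<Rightarrow> fm \<Rightarrow> bool" where
  "valid_in W R A \<longleftrightarrow> (\<forall>Val. \<forall>x\<in>W. sat R Val x A)"

end

theory Submission
  imports Defs
begin

lemma peval_Neg[simp]: "peval v (Neg A) = (\<not> peval v A)" by (simp add: Neg_def)
lemma peval_Conj[simp]: "peval v (Conj A B) = (peval v A \<and> peval v B)" by (simp add: Conj_def Neg_def)
lemma sat_Neg[simp]: "sat R Val x (Neg A) = (\<not> sat R Val x A)" by (simp add: Neg_def)
lemma sat_Conj[simp]: "sat R Val x (Conj A B) = (sat R Val x A \<and> sat R Val x B)"
  by (simp add: Conj_def Neg_def)

fun chi :: "fm list \<Rightarrow> fm set \<Rightarrow> fm" where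
  "chi [] G = Neg Bot"
| "chi (p # ps) G = Conj (if p \<in> G then p else Neg p) (chi ps G)"

lemma peval_chi: "peval v (chi ps G) \<longleftrightarrow> (\<forall>q\<in>set ps. peval v q \<longleftrightarrow> q \<in> G)"
  by (induction ps) auto

lemma chi_inter: "set ps \<subseteq> S \<Longrightarrow> chi ps (G \<inter> S) = chi ps G"
  by (induction ps) auto

lemma prov_taut0: "(\<forall>v. peval v C) \<Longrightarrow> prov L C"
  by (rule prov.taut) (simp add: tautology_def)

lemma prov_taut1: "prov L B \<Longrightarrow> (\<forall>v. peval v B \<longrightarrow> peval v C) \<Longrightarrow> prov L C"
  by (metis prov.mp prov_taut0 peval.simps(3))

lemma prov_taut2: "prov L B1 \<Longrightarrow> prov L B2 \<Longrightarrow> (\<forall>v. peval v B1 \<longrightarrow> peval v B2 \<longrightarrow> peval v C) \<Longrightarrow> prov L C"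
proof -
  assume a: "prov L B1" "prov L B2" "\<forall>v. peval v B1 \<longrightarrow> peval v B2 \<longrightarrow> peval v C"
  have "prov L (Imp B1 (Imp B2 C))" using a(3) by (intro prov_taut0) simp
  then show ?thesis using a(1,2) by (meson prov.mp)
qed

definition cons :: "logic \<Rightarrow> fm \<Rightarrow> bool" where "cons L D \<longleftrightarrow> \<not> prov L (Neg D)"

lemma cons_sat: "cons L D \<Longrightarrow> \<exists>v. peval v D"
  using prov_taut0[of "Neg D" L] by (auto simp: cons_def)

lemma cons_mono: "cons L D \<Longrightarrow> (\<forall>v. peval v D \<longrightarrow> peval v E) \<Longrightarrow> cons L E"
  unfolding cons_def using prov_taut1[of L "Neg E" "Neg D"] by auto

lemma cons_split: "cons L D \<Longrightarrow> cons L (Conj D p) \<or> cons L (Conj D (Neg p))"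
  unfolding cons_def using prov_taut2[of L "Neg (Conj D p)" "Neg (Conj D (Neg p))" "Neg D"] by auto

lemma lindenbaum: "cons L D \<Longrightarrow> \<exists>G. cons L (Conj D (chi ps G))"
proof (induction ps arbitrary: D)
  case Nil
  then show ?case by (intro exI[of _ "{}"]) (auto elim: cons_mono)
next
  case (Cons p ps)
  from cons_split[OF Cons.prems, of p] show ?case
  proof
    assume "cons L (Conj D p)"
    then obtain G where G: "cons L (Conj (Conj D p) (chi ps G))" using Cons.IH by blast
    show ?thesis
      by (rule exI[of _ "insert p G"], rule cons_mono[OF G]) (auto simp: peval_chi)
  next
    assume "cons L (Conj D (Neg p))"
    then obtain G where G: "cons L (Conj (Conj D (Neg p)) (chi ps G))" using Cons.IH by blast
    show ?thesis
      by (rule exI[of _ "G - {p}"], rule cons_mono[OF G]) (auto simp: peval_chi)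
  qed
qed

lemma sat_peval: "peval (\<lambda>B. sat R Val x B) A = sat R Val x A"
  by (induction A) auto

lemma sound: "prov L A \<Longrightarrow> L_frame L W R \<Longrightarrow> valid_in W R A"
proof (induction rule: prov.induct)
  case (taut A)
  show ?case unfolding valid_in_def
  proof (intro allI ballI)
    fix Val x
    have "peval (\<lambda>B. sat R Val x B) A" using taut.hyps unfolding tautology_def by blast
    then show "sat R Val x A" by (simp only: sat_peval)
  qed
next
  case axP
  then show ?case by (auto simp: valid_in_def L_frame_def P_frame_def)
next
  case (axD A)
  show ?case unfolding valid_in_def
  proof (intro allI ballI)
    fix Val x assume x: "x \<in> W"
    have f1: "L_frame L W R" by fact
    have f2: "hasD L" by fact
    have fr: "mn_frame W R" "D_frame W R" using f1 f2 unfolding L_frame_def by simp_all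
    define V where "V = {y\<in>W. sat R Val y A}"
    have "V \<subseteq> W" unfolding V_def by blast
    then have "R x V \<or> R x (W - V)" using fr(2) x unfolding D_frame_def by blast
    then show "sat R Val x (Neg (Conj (Box A) (Box (Neg A))))"
    proof
      assume a: "R x V"
      show ?thesis
      proof (simp only: sat_Neg sat_Conj sat.simps, rule notI, elim conjE)
        assume "\<forall>V. R x V \<longrightarrow> (\<exists>y\<in>V. \<not> sat R Val y A)"
        then obtain y where "y \<in> V" "\<not> sat R Val y A" using a by blast
        then show False unfolding V_def by blast
      qed
    next
      assume a: "R x (W - V)"
      show ?thesis
      proof (simp only: sat_Neg sat_Conj sat.simps, rule notI, elim conjE)
        assume "\<forall>V. R x V \<longrightarrow> (\<exists>y\<in>V. sat R Val y A)"
        then obtain y where "y \<in> W - V" "sat R Val y A" using a by blast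
        then show False unfolding V_def by blast
      qed
    qed
  qed
next
  case (axF A)
  show ?case unfolding valid_in_def
  proof (intro allI ballI)
    fix Val x assume x: "x \<in> W"
    have f1: "L_frame L W R" by fact
    have f2: "hasF L" by fact
    have tr: "transitive_frame W R" using f1 f2 unfolding L_frame_def by simp
    show "sat R Val x (Imp (Box A) (Box (Box A)))"
    proof (simp, intro impI allI)
      assume bA: "\<forall>V. R x V \<longrightarrow> (\<exists>y\<in>V. sat R Val y A)"
      fix V assume xV: "R x V"
      show "\<exists>y\<in>V. \<forall>V. R y V \<longrightarrow> (\<exists>y\<in>V. sat R Val y A)"
      proof (rule ccontr)
        assume "\<not> ?thesis"
        then have "\<forall>y\<in>V. \<exists>U. R y U \<and> (\<forall>z\<in>U. \<not> sat R Val z A)" by blast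
        then obtain Us where Us: "\<forall>y\<in>V. R y (Us y) \<and> (\<forall>z\<in>Us y. \<not> sat R Val z A)"
          by metis
        then have "R x (\<Union>y\<in>V. Us y)" using tr xV unfolding transitive_frame_def by blast
        then show False using bA Us by blast
      qed
    qed
  qed
next
  case (mp A B)
  then show ?case by (auto simp: valid_in_def)
next
  case (nec A)
  show ?case unfolding valid_in_def
  proof (intro allI ballI)
    fix Val x assume "x \<in> W"
    have fr: "\<And>V. R x V \<Longrightarrow> V \<noteq> {} \<and> V \<subseteq> W" using nec.prems unfolding L_frame_def mn_frame_def by blast
    have v: "\<And>y. y \<in> W \<Longrightarrow> sat R Val y A" using nec.IH[OF nec.prems] unfolding valid_in_def by blast
    show "sat R Val x (Box A)"
    proof (simp only: sat.simps, intro allI impI)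
      fix V assume "R x V"
      then obtain y where "y \<in> V" "y \<in> W" using fr by blast
      then show "\<exists>y\<in>V. sat R Val y A" using v by blast
    qed
  qed
next
  case (rm A B)
  show ?case unfolding valid_in_def
  proof (intro allI ballI)
    fix Val x assume "x \<in> W"
    have fr: "\<And>V. R x V \<Longrightarrow> V \<subseteq> W" using rm.prems unfolding L_frame_def mn_frame_def by blast
    have v: "\<And>y. y \<in> W \<Longrightarrow> sat R Val y A \<Longrightarrow> sat R Val y B"
      using rm.IH[OF rm.prems] unfolding valid_in_def by simp
    show "sat R Val x (Imp (Box A) (Box B))"
    proof (simp only: sat.simps, intro allI impI)
      fix V assume a: "\<forall>V. R x V \<longrightarrow> (\<exists>y\<in>V. sat R Val y A)" and b: "R x V"
      then obtain y where "y \<in> V" "sat R Val y A" by blast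
      then show "\<exists>y\<in>V. sat R Val y B" using v fr[OF b] by blast
    qed
  qed
qed


locale canon =
  fixes L :: logic and ps :: "fm list"
  assumes clI: "Imp B C \<in> set ps \<Longrightarrow> B \<in> set ps \<and> C \<in> set ps"
  and clB: "Box B \<in> set ps \<Longrightarrow> B \<in> set ps"
begin

definition Wc :: "fm set set" where "Wc = {G. G \<subseteq> set ps \<and> cons L (chi ps G)}"

definition Rc :: "fm set \<Rightarrow> fm set set \<Rightarrow> bool" where
  "Rc G V \<longleftrightarrow> G \<in> Wc \<and> V \<noteq> {} \<and> V \<subseteq> Wc \<and>
     (\<forall>C. Box C \<in> G \<longrightarrow> (\<exists>y\<in>V. C \<in> y) \<and> (hasF L \<longrightarrow> (\<exists>y\<in>V. Box C \<in> y)))"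

lemma Wc_sub: "G \<in> Wc \<Longrightarrow> G \<subseteq> set ps" by (simp add: Wc_def)

lemma atom_ex: "cons L D \<Longrightarrow> \<exists>y\<in>Wc. \<exists>v. peval v D \<and> (\<forall>q\<in>set ps. peval v q \<longleftrightarrow> q \<in> y)"
proof -
  assume "cons L D"
  then obtain G where G: "cons L (Conj D (chi ps G))" using lindenbaum by blast
  have e: "chi ps (G \<inter> set ps) = chi ps G" by (rule chi_inter) simp
  have "cons L (chi ps G)" by (rule cons_mono[OF G]) simp
  then have y: "G \<inter> set ps \<in> Wc" unfolding Wc_def using e by simp
  obtain v where "peval v (Conj D (chi ps G))" using cons_sat[OF G] by blast
  then have "peval v D \<and> (\<forall>q\<in>set ps. peval v q \<longleftrightarrow> q \<in> G \<inter> set ps)"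
    by (simp add: peval_chi)
  then show ?thesis using y by blast
qed

lemma atom_val: "G \<in> Wc \<Longrightarrow> \<exists>v. \<forall>q\<in>set ps. peval v q \<longleftrightarrow> q \<in> G"
proof -
  assume "G \<in> Wc"
  then have "cons L (chi ps G)" by (simp add: Wc_def)
  then obtain v where "peval v (chi ps G)" using cons_sat by blast
  then show ?thesis by (auto simp: peval_chi)
qed

lemma derive_mem: "G \<in> Wc \<Longrightarrow> X \<in> set ps \<Longrightarrow> prov L (Imp (chi ps G) X) \<Longrightarrow> X \<in> G"
proof (rule ccontr)
  assume a: "G \<in> Wc" "X \<in> set ps" "prov L (Imp (chi ps G) X)" "X \<notin> G"
  have "prov L (Neg (chi ps G))"
    by (rule prov_taut1[OF a(3)]) (use a(2,4) in \<open>auto simp: peval_chi\<close>)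
  then show False using a(1) unfolding Wc_def cons_def by blast
qed

lemma mem_derive: "X \<in> G \<Longrightarrow> X \<in> set ps \<Longrightarrow> prov L (Imp (chi ps G) X)"
  by (rule prov_taut0) (auto simp: peval_chi)

lemma not_derive_bot: "G \<in> Wc \<Longrightarrow> \<not> prov L (Imp (chi ps G) Bot)"
  by (simp add: Wc_def cons_def Neg_def)

abbreviation Valc :: "nat \<Rightarrow> fm set set" where "Valc \<equiv> \<lambda>n. {G. Var n \<in> G}"

lemma truth: "B \<in> set ps \<Longrightarrow> G \<in> Wc \<Longrightarrow> sat Rc Valc G B \<longleftrightarrow> B \<in> G"
proof (induction B arbitrary: G)
  case (Var n)
  then show ?case by simp
next
  case Bot
  then obtain v where "\<forall>q\<in>set ps. peval v q \<longleftrightarrow> q \<in> G" using atom_val by blast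
  then have "Bot \<notin> G" using Bot.prems(1) by (metis peval.simps(2))
  then show ?case by simp
next
  case (Imp B C)
  have bc: "B \<in> set ps" "C \<in> set ps" using clI[OF Imp.prems(1)] by blast+
  obtain v where v: "\<forall>q\<in>set ps. peval v q \<longleftrightarrow> q \<in> G" using atom_val Imp.prems(2) by blast
  have i1: "sat Rc Valc G B \<longleftrightarrow> B \<in> G" by (rule Imp.IH(1)[OF bc(1) Imp.prems(2)])
  have i2: "sat Rc Valc G C \<longleftrightarrow> C \<in> G" by (rule Imp.IH(2)[OF bc(2) Imp.prems(2)])
  have "sat Rc Valc G (Imp B C) \<longleftrightarrow> (B \<in> G \<longrightarrow> C \<in> G)"
    unfolding sat.simps i1 i2 ..
  also have "\<dots> \<longleftrightarrow> peval v (Imp B C)" unfolding peval.simps using v bc by blast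
  also have "\<dots> \<longleftrightarrow> Imp B C \<in> G" using v Imp.prems(1) by blast
  finally show ?case .
next
  case (Box B)
  have Bps: "B \<in> set ps" using clB Box.prems(1) by blast
  have G: "G \<in> Wc" by fact
  show ?case
  proof
    assume s: "sat Rc Valc G (Box B)"
    show "Box B \<in> G"
    proof (rule ccontr)
      assume nb: "Box B \<notin> G"
      have nd: "\<not> prov L (Imp (chi ps G) (Box B))"
        using derive_mem[OF G Box.prems(1)] nb by blast
      define V where "V = {y\<in>Wc. B \<notin> y}"
      have "V \<noteq> {}"
      proof -
        have "cons L (Neg B)"
        proof (rule ccontr)
          assume "\<not> cons L (Neg B)"
          then have "prov L (Neg (Neg B))" by (simp add: cons_def)
          then have "prov L B" by (rule prov_taut1) auto
          then have "prov L (Box B)" by (rule prov.nec)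
          then have "prov L (Imp (chi ps G) (Box B))" by (rule prov_taut1) auto
          then show False using nd by blast
        qed
        then obtain y v where "y \<in> Wc" "peval v (Neg B)" "\<forall>q\<in>set ps. peval v q \<longleftrightarrow> q \<in> y"
          using atom_ex by blast
        then have "B \<notin> y" using Bps by simp
        then have "y \<in> V" unfolding V_def using \<open>y \<in> Wc\<close> by blast
        then show ?thesis by blast
      qed
      moreover have "\<forall>C. Box C \<in> G \<longrightarrow> (\<exists>y\<in>V. C \<in> y) \<and> (hasF L \<longrightarrow> (\<exists>y\<in>V. Box C \<in> y))"
      proof (intro allI impI conjI)
        fix C assume bc: "Box C \<in> G"
        have bcps: "Box C \<in> set ps" using bc Wc_sub[OF G] by blast
        then have cps: "C \<in> set ps" using clB by blast
        have dC: "prov L (Imp (chi ps G) (Box C))" by (rule mem_derive[OF bc bcps])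
        have "cons L (Conj C (Neg B))"
        proof (rule ccontr)
          assume "\<not> cons L (Conj C (Neg B))"
          then have "prov L (Neg (Conj C (Neg B)))" by (simp add: cons_def)
          then have "prov L (Imp C B)" by (rule prov_taut1) auto
          then have "prov L (Imp (Box C) (Box B))" by (rule prov.rm)
          then have "prov L (Imp (chi ps G) (Box B))" using dC by (rule prov_taut2) auto
          then show False using nd by blast
        qed
        then obtain y v where "y \<in> Wc" "peval v (Conj C (Neg B))" "\<forall>q\<in>set ps. peval v q \<longleftrightarrow> q \<in> y"
          using atom_ex by blast
        then have "C \<in> y" "B \<notin> y" using Bps cps by simp_all
        then show "\<exists>y\<in>V. C \<in> y" unfolding V_def using \<open>y \<in> Wc\<close> by blast
      next
        fix C assume bc: "Box C \<in> G" and hF: "hasF L"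
        have bcps: "Box C \<in> set ps" using bc Wc_sub[OF G] by blast
        have dC: "prov L (Imp (chi ps G) (Box C))" by (rule mem_derive[OF bc bcps])
        have "cons L (Conj (Box C) (Neg B))"
        proof (rule ccontr)
          assume "\<not> cons L (Conj (Box C) (Neg B))"
          then have "prov L (Neg (Conj (Box C) (Neg B)))" by (simp add: cons_def)
          then have "prov L (Imp (Box C) B)" by (rule prov_taut1) auto
          then have r: "prov L (Imp (Box (Box C)) (Box B))" by (rule prov.rm)
          have "prov L (Imp (Box C) (Box (Box C)))" using hF by (rule prov.axF)
          then have "prov L (Imp (Box C) (Box B))" using r by (rule prov_taut2) auto
          then have "prov L (Imp (chi ps G) (Box B))" using dC by (rule prov_taut2) auto
          then show False using nd by blast
        qed
        then obtain y v where "y \<in> Wc" and pv: "peval v (Conj (Box C) (Neg B))"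
            and m: "\<forall>q\<in>set ps. peval v q \<longleftrightarrow> q \<in> y"
          using atom_ex by blast
        have h1: "peval v (Box C)" using pv by (simp only: peval_Conj)
        have h2: "\<not> peval v B" using pv by simp
        have "Box C \<in> y" using bspec[OF m bcps] h1 by (rule iffD1)
        moreover have "B \<notin> y" using h2 bspec[OF m Bps] by (simp only: simp_thms)
        ultimately have "Box C \<in> y" "B \<notin> y" by auto
        then show "\<exists>y\<in>V. Box C \<in> y" unfolding V_def using \<open>y \<in> Wc\<close> by blast
      qed
      moreover have "V \<subseteq> Wc" unfolding V_def by blast
      ultimately have RGV: "Rc G V" unfolding Rc_def using G by blast
      have "\<exists>y\<in>V. sat Rc Valc y B" using s RGV unfolding sat.simps by blast
      then obtain y where y: "y \<in> V" "sat Rc Valc y B" by blast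
      then have "y \<in> Wc" "B \<notin> y" unfolding V_def by blast+
      then show False using Box.IH[OF Bps] y(2) by blast
    qed
  next
    assume bB: "Box B \<in> G"
    show "sat Rc Valc G (Box B)"
    proof (simp only: sat.simps, intro allI impI)
      fix V assume "Rc G V"
      then obtain y where "y \<in> V" "B \<in> y" "V \<subseteq> Wc" using bB unfolding Rc_def by blast
      then show "\<exists>y\<in>V. sat Rc Valc y B" using Box.IH[OF Bps] by blast
    qed
  qed
qed

lemma Wc_finite: "finite Wc"
proof -
  have "Wc \<subseteq> Pow (set ps)" unfolding Wc_def by blast
  then show ?thesis using finite_subset by blast
qed

lemma Rc_mn: "Wc \<noteq> {} \<Longrightarrow> mn_frame Wc Rc"
  unfolding mn_frame_def
proof (intro conjI allI impI)
  fix x V U assume a: "Rc x V \<and> V \<subseteq> U \<and> U \<subseteq> Wc"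
  then have "V \<noteq> {}" "x \<in> Wc" unfolding Rc_def by blast+
  then have "U \<noteq> {}" using a by blast
  then show "Rc x U" using a unfolding Rc_def by blast
qed (auto simp: Rc_def)

lemma box_cons: "x \<in> Wc \<Longrightarrow> prov L (Imp (chi ps x) (Box C)) \<Longrightarrow> hasP L \<or> hasD L \<Longrightarrow> cons L C"
proof (rule ccontr)
  assume x: "x \<in> Wc" and dC: "prov L (Imp (chi ps x) (Box C))" and h: "hasP L \<or> hasD L"
    and nc: "\<not> cons L C"
  then have "prov L (Neg C)" by (simp add: cons_def)
  then have "prov L (Imp C Bot)" by (simp add: Neg_def)
  then have r: "prov L (Imp (Box C) (Box Bot))" by (rule prov.rm)
  have nb: "prov L (Neg (Box Bot))"
    using h
  proof
    assume "hasP L" then show ?thesis by (rule prov.axP)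
  next
    assume hd: "hasD L"
    have t: "prov L (Neg Bot)" by (rule prov_taut0) simp
    have bt: "prov L (Box (Neg Bot))" using prov.nec[OF t] .
    have "prov L (Neg (Conj (Box Bot) (Box (Neg Bot))))" using hd by (rule prov.axD)
    then show ?thesis using bt by (rule prov_taut2) auto
  qed
  have "prov L (Neg (Box C))" using r nb by (rule prov_taut2) auto
  then have "prov L (Imp (chi ps x) Bot)" using dC by (rule prov_taut2) auto
  then show False using not_derive_bot[OF x] by blast
qed

lemma Rc_W: "hasP L \<or> hasD L \<Longrightarrow> x \<in> Wc \<Longrightarrow> Rc x Wc"
  unfolding Rc_def
proof (intro conjI allI impI)
  assume h: "hasP L \<or> hasD L" and x: "x \<in> Wc"
  then show "Wc \<noteq> {}" by blast
  fix C assume bc: "Box C \<in> x"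
  have bcps: "Box C \<in> set ps" using bc Wc_sub[OF x] by blast
  then have cps: "C \<in> set ps" using clB by blast
  have dC: "prov L (Imp (chi ps x) (Box C))" by (rule mem_derive[OF bc bcps])
  have "cons L C" by (rule box_cons[OF x dC h])
  then obtain y v where y: "y \<in> Wc" and pv: "peval v C" and m: "\<forall>q\<in>set ps. peval v q \<longleftrightarrow> q \<in> y"
    using atom_ex by blast
  have "C \<in> y" using bspec[OF m cps] pv by (rule iffD1)
  then show "\<exists>y\<in>Wc. C \<in> y" using y by blast
  show "\<exists>y\<in>Wc. Box C \<in> y" using x bc by blast
qed (auto)

lemma Rc_P: "hasP L \<Longrightarrow> P_frame Wc Rc"
  unfolding P_frame_def using Rc_W by blast

lemma bad: "x \<in> Wc \<Longrightarrow> U \<subseteq> Wc \<Longrightarrow> \<not> Rc x U \<Longrightarrow>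
  \<exists>D. prov L (Imp (chi ps x) (Box D)) \<and> (\<forall>y\<in>U. \<forall>v. (\<forall>q\<in>set ps. peval v q \<longleftrightarrow> q \<in> y) \<longrightarrow> \<not> peval v D)"
proof -
  assume x: "x \<in> Wc" and U: "U \<subseteq> Wc" and nR: "\<not> Rc x U"
  show ?thesis
  proof (cases "U = {}")
    case True
    have t: "prov L (Neg Bot)" by (rule prov_taut0) simp
    have "prov L (Box (Neg Bot))" using prov.nec[OF t] .
    then have "prov L (Imp (chi ps x) (Box (Neg Bot)))" by (rule prov_taut1) auto
    then show ?thesis using True by blast
  next
    case False
    then obtain C where bc: "Box C \<in> x" and
      c: "\<not> (\<exists>y\<in>U. C \<in> y) \<or> (hasF L \<and> \<not> (\<exists>y\<in>U. Box C \<in> y))"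
      using nR x U unfolding Rc_def by blast
    have bcps: "Box C \<in> set ps" using bc Wc_sub[OF x] by blast
    then have cps: "C \<in> set ps" using clB by blast
    have dC: "prov L (Imp (chi ps x) (Box C))" by (rule mem_derive[OF bc bcps])
    from c show ?thesis
    proof
      assume n: "\<not> (\<exists>y\<in>U. C \<in> y)"
      have "\<forall>y\<in>U. \<forall>v. (\<forall>q\<in>set ps. peval v q \<longleftrightarrow> q \<in> y) \<longrightarrow> \<not> peval v C"
        using n cps by blast
      then show ?thesis using dC by blast
    next
      assume n: "hasF L \<and> \<not> (\<exists>y\<in>U. Box C \<in> y)"
      have "\<forall>y\<in>U. \<forall>v. (\<forall>q\<in>set ps. peval v q \<longleftrightarrow> q \<in> y) \<longrightarrow> \<not> peval v (Box C)"
        using n bcps by blast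
      moreover have "prov L (Imp (chi ps x) (Box (Box C)))"
      proof -
        have "prov L (Imp (Box C) (Box (Box C)))" using n by (intro prov.axF) blast
        then show ?thesis using dC by (rule prov_taut2) auto
      qed
      ultimately show ?thesis by blast
    qed
  qed
qed

lemma Rc_D: "hasD L \<Longrightarrow> D_frame Wc Rc"
  unfolding D_frame_def
proof (intro ballI allI impI)
  fix x V assume hd: "hasD L" and x: "x \<in> Wc" and V: "V \<subseteq> Wc"
  show "Rc x V \<or> Rc x (Wc - V)"
  proof (rule ccontr)
    assume "\<not> (Rc x V \<or> Rc x (Wc - V))"
    then have n1: "\<not> Rc x V" and n2: "\<not> Rc x (Wc - V)" by blast+
    obtain D1 where d1: "prov L (Imp (chi ps x) (Box D1))"
      and e1: "\<forall>y\<in>V. \<forall>v. (\<forall>q\<in>set ps. peval v q \<longleftrightarrow> q \<in> y) \<longrightarrow> \<not> peval v D1"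
      using bad[OF x V n1] by blast
    obtain D2 where d2: "prov L (Imp (chi ps x) (Box D2))"
      and e2: "\<forall>y\<in>Wc - V. \<forall>v. (\<forall>q\<in>set ps. peval v q \<longleftrightarrow> q \<in> y) \<longrightarrow> \<not> peval v D2"
      using bad[OF x _ n2] by blast
    have "\<not> cons L (Conj D1 D2)"
    proof
      assume "cons L (Conj D1 D2)"
      then obtain y v where y: "y \<in> Wc" and pv: "peval v (Conj D1 D2)"
        and m: "\<forall>q\<in>set ps. peval v q \<longleftrightarrow> q \<in> y"
        using atom_ex by blast
      have "peval v D1" "peval v D2" using pv by simp_all
      then show False using e1 e2 y m by blast
    qed
    then have "prov L (Neg (Conj D1 D2))" by (simp add: cons_def)
    then have "prov L (Imp D1 (Neg D2))" by (rule prov_taut1) auto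
    then have r: "prov L (Imp (Box D1) (Box (Neg D2)))" by (rule prov.rm)
    have ad: "prov L (Neg (Conj (Box D2) (Box (Neg D2))))" using hd by (rule prov.axD)
    have "prov L (Imp (Box D1) (Neg (Box D2)))" using r ad by (rule prov_taut2) auto
    then have "prov L (Imp (chi ps x) (Neg (Box D2)))" using d1 by (rule prov_taut2) auto
    then have "prov L (Imp (chi ps x) Bot)" using d2 by (rule prov_taut2) auto
    then show False using not_derive_bot[OF x] by blast
  qed
qed

lemma Rc_T: "hasF L \<Longrightarrow> transitive_frame Wc Rc"
  unfolding transitive_frame_def
proof (intro allI impI)
  fix x V Us assume hF: "hasF L" and a: "Rc x V \<and> (\<forall>y\<in>V. Rc y (Us y))"
  then have xV: "Rc x V" and yU: "\<forall>y\<in>V. Rc y (Us y)" by blast+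
  show "Rc x (\<Union>y\<in>V. Us y)"
    unfolding Rc_def
  proof (intro conjI allI impI)
    show "x \<in> Wc" using xV unfolding Rc_def by blast
    obtain y where "y \<in> V" using xV unfolding Rc_def by blast
    then have "Us y \<noteq> {}" using yU unfolding Rc_def by blast
    then show "(\<Union>y\<in>V. Us y) \<noteq> {}" using \<open>y \<in> V\<close> by blast
    show "(\<Union>y\<in>V. Us y) \<subseteq> Wc" using yU unfolding Rc_def by blast
    fix C assume bc: "Box C \<in> x"
    obtain y where y: "y \<in> V" "Box C \<in> y" using xV bc hF unfolding Rc_def by blast
    then have r: "Rc y (Us y)" using yU by blast
    then obtain z where "z \<in> Us y" "C \<in> z" using y(2) unfolding Rc_def by blast
    then show "\<exists>z\<in>\<Union>y\<in>V. Us y. C \<in> z" using y(1) by blast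
    obtain z where "z \<in> Us y" "Box C \<in> z" using r y(2) hF unfolding Rc_def by blast
    then show "\<exists>z\<in>\<Union>y\<in>V. Us y. Box C \<in> z" using y(1) by blast
  qed
qed

lemma Rc_L: "Wc \<noteq> {} \<Longrightarrow> L_frame L Wc Rc"
  unfolding L_frame_def using Rc_mn Rc_P Rc_D Rc_T by blast

end

fun subs :: "fm \<Rightarrow> fm list" where
  "subs (Var n) = [Var n]"
| "subs Bot = [Bot]"
| "subs (Imp a b) = Imp a b # subs a @ subs b"
| "subs (Box a) = Box a # subs a"

lemma subs_self: "A \<in> set (subs A)"
  by (cases A) auto

lemma subs_trans: "B \<in> set (subs A) \<Longrightarrow> set (subs B) \<subseteq> set (subs A)"
  by (induction A) auto

lemma canon_subs: "canon (subs A)"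
proof
  fix B C assume "Imp B C \<in> set (subs A)"
  then have "set (subs (Imp B C)) \<subseteq> set (subs A)" by (rule subs_trans)
  then show "B \<in> set (subs A) \<and> C \<in> set (subs A)" using subs_self by auto
next
  fix B assume "Box B \<in> set (subs A)"
  then have "set (subs (Box B)) \<subseteq> set (subs A)" by (rule subs_trans)
  then show "B \<in> set (subs A)" using subs_self by auto
qed

lemma completeness:
  assumes "\<not> prov L A"
  shows "\<exists>(W :: fm set set) R. L_frame L W R \<and> finite W \<and> \<not> valid_in W R A"
proof -
  interpret c: canon L "subs A" by (rule canon_subs)
  have "cons L (Neg A)"
  proof (rule ccontr)
    assume "\<not> cons L (Neg A)"
    then have "prov L (Neg (Neg A))" by (simp add: cons_def)
    then have "prov L A" by (rule prov_taut1) auto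
    then show False using assms by blast
  qed
  then obtain y v where y: "y \<in> c.Wc" and pv: "peval v (Neg A)"
    and m: "\<forall>q\<in>set (subs A). peval v q \<longleftrightarrow> q \<in> y"
    using c.atom_ex by blast
  have "A \<notin> y" using bspec[OF m subs_self] pv by simp
  then have "\<not> sat c.Rc c.Valc y A" using c.truth[OF subs_self y] by blast
  then have "\<not> valid_in c.Wc c.Rc A" unfolding valid_in_def using y by blast
  moreover have "c.Wc \<noteq> {}" using y by blast
  ultimately show ?thesis using c.Rc_L c.Wc_finite by blast
qed

lemma mn_frameD: "mn_frame W R \<Longrightarrow> R x V \<Longrightarrow> x \<in> W \<and> V \<noteq> {} \<and> V \<subseteq> W"
proof -
  assume m: "mn_frame W R" and r: "R x V"
  have "\<forall>x V. R x V \<longrightarrow> x \<in> W \<and> V \<noteq> {} \<and> V \<subseteq> W"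
    using m[unfolded mn_frame_def] by (rule conjunct1[OF conjunct2])
  then show ?thesis using r by blast
qed

lemma mn_frame_up: "mn_frame W R \<Longrightarrow> R x V \<Longrightarrow> V \<subseteq> U \<Longrightarrow> U \<subseteq> W \<Longrightarrow> R x U"
proof -
  assume m: "mn_frame W R" and r: "R x V" "V \<subseteq> U" "U \<subseteq> W"
  have "\<forall>x V U. R x V \<and> V \<subseteq> U \<and> U \<subseteq> W \<longrightarrow> R x U"
    using m[unfolded mn_frame_def] by (rule conjunct2[OF conjunct2])
  then show ?thesis using r by blast
qed

lemma transfer_sat:
  fixes f :: "'a \<Rightarrow> 'b"
  assumes inj: "inj_on f W" and fr: "\<And>x V. R x V \<Longrightarrow> x \<in> W \<and> V \<subseteq> W"
    and Rdef2: "\<And>a U. R2 a U \<longleftrightarrow> (\<exists>x V. R x V \<and> a = f x \<and> U = f ` V)"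
  shows "x \<in> W \<Longrightarrow> sat R2 (\<lambda>n. f ` (Val n \<inter> W)) (f x) B \<longleftrightarrow> sat R Val x B"
proof (induction B arbitrary: x)
  case (Var n)
  have "f x \<in> f ` (Val n \<inter> W) \<longleftrightarrow> x \<in> Val n"
  proof
    assume "f x \<in> f ` (Val n \<inter> W)"
    then obtain z where "z \<in> Val n \<inter> W" "f z = f x" by (metis imageE)
    then have "z = x" using inj_onD[OF inj \<open>f z = f x\<close>] Var by blast
    then show "x \<in> Val n" using \<open>z \<in> Val n \<inter> W\<close> by blast
  next
    assume "x \<in> Val n" then show "f x \<in> f ` (Val n \<inter> W)" using Var by blast
  qed
  then show ?case by simp
next
  case Bot then show ?case by simp
next
  case (Imp B C) then show ?case by simp
next
  case (Box B)
  show ?case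
  proof
    assume s: "sat R2 (\<lambda>n. f ` (Val n \<inter> W)) (f x) (Box B)"
    show "sat R Val x (Box B)"
    proof (simp only: sat.simps, intro allI impI)
      fix V assume xV: "R x V"
      then have "R2 (f x) (f ` V)" unfolding Rdef2 by blast
      then obtain z where z: "z \<in> f ` V" "sat R2 (\<lambda>n. f ` (Val n \<inter> W)) z B"
        using s unfolding sat.simps by blast
      then obtain y where y: "y \<in> V" "z = f y" by blast
      then have "y \<in> W" using fr[OF xV] by blast
      moreover have "sat R2 (\<lambda>n. f ` (Val n \<inter> W)) (f y) B" using z(2) y(2) by simp
      ultimately have "sat R Val y B" using Box.IH by blast
      then show "\<exists>y\<in>V. sat R Val y B" using y(1) by blast
    qed
  next
    assume s: "sat R Val x (Box B)"
    show "sat R2 (\<lambda>n. f ` (Val n \<inter> W)) (f x) (Box B)"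
    proof (simp only: sat.simps, intro allI impI)
      fix U assume "R2 (f x) U"
      then obtain x' V where r: "R x' V" "f x = f x'" "U = f ` V" unfolding Rdef2 by blast
      then have "x' \<in> W" "V \<subseteq> W" using fr by blast+
      then have "x' = x" using inj_onD[OF inj r(2)] Box.prems by simp
      then obtain y where y: "y \<in> V" "sat R Val y B" using s r(1) unfolding sat.simps by blast
      then have "y \<in> W" using \<open>V \<subseteq> W\<close> by blast
      then show "\<exists>z\<in>U. sat R2 (\<lambda>n. f ` (Val n \<inter> W)) z B" using Box.IH y r(3) by blast
    qed
  qed
qed

lemma transfer:
  fixes f :: "'a \<Rightarrow> 'b" and W :: "'a set"
  assumes inj: "inj_on f W" and L: "L_frame L W R" and nv: "\<not> valid_in W R A"
  shows "\<exists>(W' :: 'b set) R2. L_frame L W' R2 \<and> finite W' = finite W \<and> \<not> valid_in W' R2 A"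
proof -
  define R2 where "R2 a U \<longleftrightarrow> (\<exists>x V. R x V \<and> a = f x \<and> U = f ` V)" for a U
  have mn: "mn_frame W R" using L unfolding L_frame_def by blast
  have fr: "\<And>x V. R x V \<Longrightarrow> x \<in> W \<and> V \<subseteq> W" using mn_frameD[OF mn] by blast
  have Rdef2: "\<And>a U. R2 a U \<longleftrightarrow> (\<exists>x V. R x V \<and> a = f x \<and> U = f ` V)" by (simp add: R2_def)
  have ts: "\<And>x Val B. x \<in> W \<Longrightarrow> sat R2 (\<lambda>n. f ` (Val n \<inter> W)) (f x) B \<longleftrightarrow> sat R Val x B"
    using transfer_sat[OF inj fr Rdef2] by blast
  have bk: "\<And>x y. x \<in> W \<Longrightarrow> y \<in> W \<Longrightarrow> f x = f y \<Longrightarrow> x = y" using inj_onD[OF inj] by blast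
  have pre: "\<And>U. U \<subseteq> f ` W \<Longrightarrow> f ` (W \<inter> f -` U) = U" by blast
  have m': "mn_frame (f ` W) R2"
    unfolding mn_frame_def
  proof (intro conjI allI impI)
    have "W \<noteq> {}" using mn[unfolded mn_frame_def] by (rule conjunct1)
    then show "f ` W \<noteq> {}" by simp
  next
    fix a U assume "R2 a U"
    then obtain x V where r: "R x V" "a = f x" "U = f ` V" unfolding Rdef2 by blast
    have xw: "x \<in> W" "V \<subseteq> W" using fr[OF r(1)] by blast+
    then show "a \<in> f ` W" using r(2) by simp
    have "V \<noteq> {}" using mn_frameD[OF mn r(1)] by blast
    then show "U \<noteq> {}" using r(3) by simp
    show "U \<subseteq> f ` W" unfolding r(3) using xw(2) by (rule image_mono)
  next
    fix a U U' assume a: "R2 a U \<and> U \<subseteq> U' \<and> U' \<subseteq> f ` W"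
    then have "R2 a U" by blast
    then obtain x V where r: "R x V" "a = f x" "U = f ` V" unfolding Rdef2 by blast
    define V' where "V' = W \<inter> f -` U'"
    have "V \<subseteq> W" using fr[OF r(1)] by blast
    moreover have "f ` V \<subseteq> U'" using a r(3) by blast
    ultimately have "V \<subseteq> V'" unfolding V'_def by blast
    moreover have "V' \<subseteq> W" unfolding V'_def by blast
    ultimately have "R x V'" using mn_frame_up[OF mn r(1)] by blast
    moreover have "f ` V' = U'" unfolding V'_def using a by (intro pre) blast
    ultimately show "R2 a U'" using r(2) unfolding Rdef2 by blast
  qed
  have p': "P_frame W R \<Longrightarrow> P_frame (f ` W) R2"
    unfolding P_frame_def
  proof
    fix a assume P: "\<forall>x\<in>W. \<exists>V. R x V" and "a \<in> f ` W"
    then obtain x where "x \<in> W" "a = f x" by blast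
    then obtain V where "R x V" using P by blast
    then show "\<exists>V. R2 a V" using \<open>a = f x\<close> unfolding Rdef2 by blast
  qed
  have d': "D_frame W R \<Longrightarrow> D_frame (f ` W) R2"
    unfolding D_frame_def
  proof (intro ballI allI impI)
    fix a U assume D: "\<forall>x\<in>W. \<forall>V. V \<subseteq> W \<longrightarrow> R x V \<or> R x (W - V)" and "a \<in> f ` W" and U: "U \<subseteq> f ` W"
    then obtain x where x: "x \<in> W" "a = f x" by blast
    define V where "V = W \<inter> f -` U"
    have "V \<subseteq> W" unfolding V_def by blast
    then have "R x V \<or> R x (W - V)" using D x by blast
    moreover have fv: "f ` V = U" unfolding V_def using U by (rule pre)
    moreover have fwv: "f ` (W - V) = f ` W - U"
    proof
      show "f ` (W - V) \<subseteq> f ` W - U"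
      proof
        fix b assume "b \<in> f ` (W - V)"
        then obtain y where y: "y \<in> W" "y \<notin> V" "b = f y" by blast
        have "b \<notin> U"
        proof
          assume "b \<in> U"
          then show False using y unfolding V_def by blast
        qed
        then show "b \<in> f ` W - U" using y by blast
      qed
      show "f ` W - U \<subseteq> f ` (W - V)" unfolding V_def by blast
    qed
    ultimately show "R2 a U \<or> R2 a (f ` W - U)"
    proof (elim disjE)
      assume "R x V"
      then have "R2 (f x) (f ` V)" unfolding Rdef2 by blast
      then show ?thesis using x(2) fv by simp
    next
      assume "R x (W - V)"
      then have "R2 (f x) (f ` (W - V))" unfolding Rdef2 by blast
      then show ?thesis using x(2) fwv by simp
    qed
  qed
  have t': "transitive_frame W R \<Longrightarrow> transitive_frame (f ` W) R2"
    unfolding transitive_frame_def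
  proof (intro allI impI)
    fix a U Us assume T: "\<forall>x V Us. R x V \<and> (\<forall>y\<in>V. R y (Us y)) \<longrightarrow> R x (\<Union>y\<in>V. Us y)"
      and a: "R2 a U \<and> (\<forall>b\<in>U. R2 b (Us b))"
    have aU: "R2 a U" and aUs: "\<forall>b\<in>U. R2 b (Us b)" using a by blast+
    obtain x V where r: "R x V" "a = f x" "U = f ` V" using aU unfolding Rdef2 by blast
    have "\<forall>y\<in>V. \<exists>V'. R y V' \<and> Us (f y) = f ` V'"
    proof
      fix y assume y: "y \<in> V"
      then have "f y \<in> U" using r(3) by blast
      then have "R2 (f y) (Us (f y))" using aUs by blast
      then obtain x' V' where r': "R x' V'" "f y = f x'" "Us (f y) = f ` V'" unfolding Rdef2 by blast
      have "y \<in> W" using y fr[OF r(1)] by blast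
      moreover have "x' \<in> W" using fr[OF r'(1)] by blast
      ultimately have "x' = y" using bk[of x' y] r'(2)[symmetric] by blast
      then show "\<exists>V'. R y V' \<and> Us (f y) = f ` V'" using r' by blast
    qed
    then have "\<exists>g. \<forall>y\<in>V. R y (g y) \<and> Us (f y) = f ` (g y)" by (rule bchoice)
    then obtain g where g: "\<forall>y\<in>V. R y (g y) \<and> Us (f y) = f ` (g y)" by blast
    then have "\<forall>y\<in>V. R y (g y)" by blast
    then have "R x (\<Union>y\<in>V. g y)" using T r(1) by blast
    moreover have "f ` (\<Union>y\<in>V. g y) = (\<Union>b\<in>U. Us b)"
    proof -
      have "(\<Union>b\<in>U. Us b) = (\<Union>y\<in>V. Us (f y))" unfolding r(3) by (simp add: image_image)
      also have "\<dots> = (\<Union>y\<in>V. f ` g y)" using g by (intro SUP_cong) simp_all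
      also have "\<dots> = f ` (\<Union>y\<in>V. g y)" by (simp add: image_UN)
      finally show ?thesis by simp
    qed
    moreover have "R2 (f x) (f ` (\<Union>y\<in>V. g y))" using calculation(1) unfolding Rdef2 by blast
    ultimately show "R2 a (\<Union>b\<in>U. Us b)" using r(2) by simp
  qed
  have "L_frame L (f ` W) R2"
    using L m' p' d' t' unfolding L_frame_def by blast
  moreover have "finite (f ` W) = finite W" using inj finite_image_iff by blast
  moreover have "\<not> valid_in (f ` W) R2 A"
  proof
    assume v: "valid_in (f ` W) R2 A"
    obtain Val x where "x \<in> W" "\<not> sat R Val x A" using nv unfolding valid_in_def by blast
    moreover have "sat R2 (\<lambda>n. f ` (Val n \<inter> W)) (f x) A" using v \<open>x \<in> W\<close> unfolding valid_in_def by blast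
    ultimately show False using ts by blast
  qed
  ultimately show ?thesis by blast
qed

lemma finite_inj_exists:
  assumes "finite (A :: 'a set)" and "infinite (UNIV :: 'b set)"
  shows "\<exists>f :: 'a \<Rightarrow> 'b. inj_on f A"
proof -
  obtain B :: "'b set" where B: "finite B" "card B = card A" "B \<subseteq> UNIV"
    using infinite_arbitrarily_large[OF assms(2)] by blast
  then obtain f where "f ` A \<subseteq> B \<and> inj_on f A" using card_le_inj[OF assms(1) B(1)] by auto
  then show ?thesis by blast
qed

lemma complete_w:
  assumes "infinite (UNIV :: 'w set)" and "\<not> prov L A"
  shows "\<exists>(W :: 'w set) R. L_frame L W R \<and> finite W \<and> \<not> valid_in W R A"
proof -
  obtain W0 :: "fm set set" and R0 where w: "L_frame L W0 R0" "finite W0" "\<not> valid_in W0 R0 A"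
    using completeness[OF assms(2)] by blast
  obtain f :: "fm set \<Rightarrow> 'w" where "inj_on f W0" using finite_inj_exists[OF w(2) assms(1)] by blast
  from transfer[OF this w(1) w(3)] show ?thesis using w(2) by blast
qed

theorem theorem3p5:
  fixes L :: logic and A :: fm
  assumes "infinite (UNIV :: 'w set)"
  shows "(prov L A \<longleftrightarrow> (\<forall>(W :: 'w set) R. L_frame L W R \<longrightarrow> valid_in W R A))
       \<and> (prov L A \<longleftrightarrow> (\<forall>(W :: 'w set) R. L_frame L W R \<and> finite W \<longrightarrow> valid_in W R A))"
  using sound complete_w[OF assms, of L A] by blast

end
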